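(* Let $n\ge1$, $p\in(0,1]$ and $q\in[n]$. Then $\gamma_n^*\ge\big(1-(1-p)^q\big)\gamma_{n,q}^*$.
   Context: For $q\in[n]$, $\gamma_{n,q}^*$ is the optimal value of $(LP)_{n,p,q}$: maximize $\gamma$ over $\mathbf x=(x_{t,s})_{t\in[n],s\in[t]}\ge0$ and $\gamma$ subject to $x_{t,s}\le\frac1t\big(1-p\sum_{\tau=1}^{t-1}\sum_{\sigma=1}^\tau x_{\tau,\sigma}\big)$ for all $t\in[n],s\in[t]$, and $\gamma\le\frac{p}{1-(1-p)^k}\sum_{t=1}^n\sum_{s=1}^tx_{t,s}P_{t,s,k}$ for all $k\in[q]$, where $P_{t,s,k}=\sum_{i=s}^{\min(k,n-t+s)}\binom{i-1}{s-1}\binom{n-i}{t-s}/\binom nt$ (the probability that the $t$-th of $n$ uniformly randomly ordered ranked candidates has overall rank $\le k$ given that its rank among the first $t$ is $s$). $\gamma_n^*=\gamma_{n,n}^*$ is the optimal value of the same program with $k$ ranging over all of $[n]$. *)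

theory Defs
  imports Complex_Main
begin

text \<open>P_{t,s,k}: probability that the t-th of n candidates has overall rank \<le> k
  given that its relative rank among the first t is s.\<close>
definition Pprob :: "nat \<Rightarrow> nat \<Rightarrow> nat \<Rightarrow> nat \<Rightarrow> real" where
  "Pprob n t s k =
     (\<Sum>i = s..min k (n - t + s). real ((i - 1) choose (s - 1)) * real ((n - i) choose (t - s)))
       / real (n choose t)"

text \<open>Feasibility for (LP)_{n,p,q}. The variables are x_{t,s} for t \<in> [n], s \<in> [t];
  values of x outside this index range are irrelevant.\<close>
definition LP_feasible :: "nat \<Rightarrow> real \<Rightarrow> nat \<Rightarrow> (nat \<Rightarrow> nat \<Rightarrow> real) \<Rightarrow> real \<Rightarrow> bool" where
  "LP_feasible n p q x \<gamma> \<longleftrightarrow>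
     (\<forall>t\<in>{1..n}. \<forall>s\<in>{1..t}. 0 \<le> x t s) \<and>
     (\<forall>t\<in>{1..n}. \<forall>s\<in>{1..t}.
        x t s \<le> (1 / real t) * (1 - p * (\<Sum>\<tau> = 1..t - 1. \<Sum>\<sigma> = 1..\<tau>. x \<tau> \<sigma>))) \<and>
     (\<forall>k\<in>{1..q}.
        \<gamma> \<le> p / (1 - (1 - p) ^ k) * (\<Sum>t = 1..n. \<Sum>s = 1..t. x t s * Pprob n t s k))"

definition gamma_opt :: "nat \<Rightarrow> real \<Rightarrow> nat \<Rightarrow> real" where
  "gamma_opt n p q = Sup {\<gamma>. \<exists>x. LP_feasible n p q x \<gamma>}"

end

theory Submission
  imports Defs
begin

lemma Pprob_nonneg: "0 \<le> Pprob n t s k"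
  unfolding Pprob_def by (intro divide_nonneg_nonneg sum_nonneg) auto

lemma Pprob_mono: assumes "k \<le> k'" shows "Pprob n t s k \<le> Pprob n t s k'"
  unfolding Pprob_def
proof (rule divide_right_mono)
  show "(\<Sum>i = s..min k (n - t + s). real ((i - 1) choose (s - 1)) * real ((n - i) choose (t - s)))
     \<le> (\<Sum>i = s..min k' (n - t + s). real ((i - 1) choose (s - 1)) * real ((n - i) choose (t - s)))"
    by (rule sum_mono2) (use assms in auto)
qed auto

lemma pow_lt1: assumes "0 < p" "p \<le> (1::real)" "1 \<le> k" shows "(1 - p) ^ k < 1" "0 \<le> (1-p)^k"
proof -
  show "(1 - p) ^ k < 1" using assms by (intro power_less_one_iff[THEN iffD2]) auto
  show "0 \<le> (1-p)^k" using assms by simp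
qed

lemma A_nonneg:
  assumes "\<forall>t\<in>{1..n}. \<forall>s\<in>{1..t}. 0 \<le> x t s"
  shows "0 \<le> (\<Sum>t = 1..n. \<Sum>s = 1..t. x t s * Pprob n t s k)"
  using assms by (intro sum_nonneg mult_nonneg_nonneg Pprob_nonneg) auto

lemma A_mono:
  assumes "\<forall>t\<in>{1..n}. \<forall>s\<in>{1..t}. 0 \<le> x t s" "k \<le> k'"
  shows "(\<Sum>t = 1..n. \<Sum>s = 1..t. x t s * Pprob n t s k) \<le> (\<Sum>t = 1..n. \<Sum>s = 1..t. x t s * Pprob n t s k')"
  using assms by (intro sum_mono mult_left_mono Pprob_mono) auto

lemma bdd:
  assumes "0 < p" "p \<le> 1" "n \<ge> 1"
  shows "bdd_above {\<gamma>. \<exists>x. LP_feasible n p n x \<gamma>}"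
proof (rule bdd_aboveI)
  fix \<gamma> assume "\<gamma> \<in> {\<gamma>. \<exists>x. LP_feasible n p n x \<gamma>}"
  then obtain x where F: "LP_feasible n p n x \<gamma>" by auto
  have nn: "\<forall>t\<in>{1..n}. \<forall>s\<in>{1..t}. 0 \<le> x t s" using F unfolding LP_feasible_def by blast
  have x1: "x t s \<le> 1" if "t \<in> {1..n}" "s \<in> {1..t}" for t s
  proof -
    have "x t s \<le> (1 / real t) * (1 - p * (\<Sum>\<tau> = 1..t - 1. \<Sum>\<sigma> = 1..\<tau>. x \<tau> \<sigma>))"
      using F that unfolding LP_feasible_def by blast
    moreover have "0 \<le> (\<Sum>\<tau> = 1..t - 1. \<Sum>\<sigma> = 1..\<tau>. x \<tau> \<sigma>)"
      using nn that by (intro sum_nonneg) auto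
    moreover have "p * (\<Sum>\<tau> = 1..t - 1. \<Sum>\<sigma> = 1..\<tau>. x \<tau> \<sigma>) \<ge> 0"
      using assms(1) calculation(2) by simp
    moreover have "(1 / real t) * (1 - p * (\<Sum>\<tau> = 1..t - 1. \<Sum>\<sigma> = 1..\<tau>. x \<tau> \<sigma>)) \<le> 1 / real t * 1"
      using calculation(3) by (intro mult_left_mono) auto
    ultimately have "x t s \<le> 1 / real t" by simp
    also have "\<dots> \<le> 1" using that by auto
    finally show ?thesis .
  qed
  have "\<gamma> \<le> p / (1 - (1 - p) ^ 1) * (\<Sum>t = 1..n. \<Sum>s = 1..t. x t s * Pprob n t s 1)"
  proof -
    have "1 \<in> {1..n}" using assms by auto
    thus ?thesis using F unfolding LP_feasible_def by blast
  qed
  also have "\<dots> = (\<Sum>t = 1..n. \<Sum>s = 1..t. x t s * Pprob n t s 1)" using assms by simp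
  also have "\<dots> \<le> (\<Sum>t = 1..n. \<Sum>s = 1..t. 1 * Pprob n t s 1)"
  proof (intro sum_mono mult_right_mono Pprob_nonneg)
    fix t s assume "t \<in> {1..n}" "s \<in> {1..t}"
    thus "x t s \<le> 1" by (rule x1)
  qed
  finally show "\<gamma> \<le> (\<Sum>t = 1..n. \<Sum>s = 1..t. 1 * Pprob n t s 1)" .
qed

theorem mainTheorem13:
  fixes n q :: nat and p :: real
  assumes "n \<ge> 1" and "0 < p" and "p \<le> 1" and "1 \<le> q" and "q \<le> n"
  shows "gamma_opt n p n \<ge> (1 - (1 - p) ^ q) * gamma_opt n p q"
proof -
  define c where "c = 1 - (1 - p) ^ q"
  have c0: "0 < c" "c \<le> 1" using pow_lt1[OF assms(2,3,4)] unfolding c_def by auto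
  let ?S = "{\<gamma>. \<exists>x. LP_feasible n p q x \<gamma>}"
  let ?T = "{\<gamma>. \<exists>x. LP_feasible n p n x \<gamma>}"
  have ne: "?S \<noteq> {}"
  proof -
    have "LP_feasible n p q (\<lambda>_ _. 0) 0" unfolding LP_feasible_def by auto
    thus ?thesis by blast
  qed
  have key: "c * \<gamma> \<in> ?T" if g: "\<gamma> \<in> ?S" for \<gamma>
  proof -
    obtain x where F: "LP_feasible n p q x \<gamma>" using g by auto
    have nn: "\<forall>t\<in>{1..n}. \<forall>s\<in>{1..t}. 0 \<le> x t s" using F unfolding LP_feasible_def by blast
    define A where "A k = (\<Sum>t = 1..n. \<Sum>s = 1..t. x t s * Pprob n t s k)" for k
    have Ann: "0 \<le> A k" for k unfolding A_def by (rule A_nonneg[OF nn])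
    have Am: "A k \<le> A k'" if "k \<le> k'" for k k' unfolding A_def by (rule A_mono[OF nn that])
    have Fq: "\<gamma> \<le> p / (1 - (1 - p) ^ k) * A k" if "k \<in> {1..q}" for k
      using F that unfolding LP_feasible_def A_def by blast
    have "c * \<gamma> \<le> p / (1 - (1 - p) ^ k) * A k" if k: "k \<in> {1..n}" for k
    proof -
      have d: "0 < 1 - (1 - p) ^ k" "1 - (1 - p) ^ k \<le> 1" using pow_lt1[OF assms(2,3), of k] k by auto
      have pd: "0 \<le> p / (1 - (1 - p) ^ k) * A k" using d Ann assms by simp
      show ?thesis
      proof (cases "k \<le> q")
        case True
        show ?thesis
        proof (cases "\<gamma> \<le> 0")
          case True thus ?thesis using c0 pd by (smt (verit) mult_nonneg_nonpos)
        next
          case False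
          have "c * \<gamma> \<le> \<gamma>" using c0 False by (simp add: mult_left_le_one_le)
          also have "\<dots> \<le> p / (1 - (1 - p) ^ k) * A k" using Fq[of k] True k by auto
          finally show ?thesis .
        qed
      next
        case False
        have "c * \<gamma> \<le> c * (p / c * A q)"
          using Fq[of q] assms c0 unfolding c_def by (intro mult_left_mono) auto
        also have "\<dots> = p * A q" using c0 by simp
        also have "\<dots> \<le> p * A k" using Am[of q k] False assms by (intro mult_left_mono) auto
        also have "\<dots> \<le> p / (1 - (1 - p) ^ k) * A k"
        proof (intro mult_right_mono Ann)
          show "p \<le> p / (1 - (1 - p) ^ k)" using d assms by (simp add: le_divide_eq)
        qed
        finally show ?thesis .
      qed
    qed
    hence "LP_feasible n p n x (c * \<gamma>)" using F unfolding LP_feasible_def A_def by blast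
    thus ?thesis by blast
  qed
  have "Sup ?S \<le> Sup ?T / c"
  proof (rule cSup_least[OF ne])
    fix \<gamma> assume "\<gamma> \<in> ?S"
    hence "c * \<gamma> \<le> Sup ?T" using key bdd[OF assms(2,3,1)] by (intro cSup_upper) auto
    thus "\<gamma> \<le> Sup ?T / c" using c0 by (simp add: le_divide_eq mult.commute)
  qed
  hence "c * Sup ?S \<le> Sup ?T" using c0 by (simp add: le_divide_eq mult.commute)
  thus ?thesis unfolding gamma_opt_def c_def by simp
qed

end
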